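(* Let $\overline{t}$ be an element of $\mathbb{T}^I$. Then $\overline{t}$ belongs to $\widehat{H}$ if, and only if, there is a finite set $\{\overline{x}_1,\dots ,\overline{x}_m\}\subseteq \mathbb{Z}^I$ such that if $\overline{g}\in H$ and $\langle\overline{g},\overline{x}_j\rangle=0$ for all $1\leq j\leq m$, then $\langle\overline{g},\overline{t}\rangle=0$.
   Context: Let $I$ be an index set of non-measurable cardinality. Let $H$ denote the group $\mathbb{Z}^{(I)}$ (the direct sum of $I$ copies of $\mathbb{Z}$), identified with $\mathrm{Hom}(\mathbb{Z}^I,\mathbb{Z})$ and equipped with the topology $t_p(\mathbb{Z}^I)$ of pointwise convergence on $\mathbb{Z}^I$ (inherited from $\mathbb{Z}^{\mathbb{Z}^I}$). For $\overline{g}\in H$ and $\overline{x}\in\mathbb{Z}^I$ (or $\overline{x}\in\mathbb{T}^I$) write $\langle\overline{g},\overline{x}\rangle:=\sum_{i\in I}\overline{g}(i)\cdot\overline{x}(i)$ (a finite sum). The circle group $\mathbb{T}$ is identified with the additive group $(-1/2,1/2]$ with addition modulo $\mathbb{Z}$. The dual group $\widehat{H}$ (continuous homomorphisms $H\to\mathbb{T}$) is regarded as a subgroup of $\mathbb{T}^I$ (the dual of $H$ with the discrete topology), an element $\overline{t}\in\mathbb{T}^I$ acting as the character $\overline{g}\mapsto\langle\overline{g},\overline{t}\rangle$. *)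

theory Defs
  imports "HOL-Analysis.Analysis"
begin

text \<open>Index set I is the universe of the type 'i. Z^I = ('i => int),
  T^I is represented by real-valued functions with values in (-1/2,1/2].\<close>

definition nonmeasurable_card :: "'a set \<Rightarrow> bool" where
  "nonmeasurable_card I \<longleftrightarrow>
     (\<forall>U. (U \<subseteq> Pow I \<and> I \<in> U \<and> {} \<notin> U
           \<and> (\<forall>A\<in>U. \<forall>B. A \<subseteq> B \<and> B \<subseteq> I \<longrightarrow> B \<in> U)
           \<and> (\<forall>A\<in>U. \<forall>B\<in>U. A \<inter> B \<in> U)
           \<and> (\<forall>A. A \<subseteq> I \<longrightarrow> A \<in> U \<or> I - A \<in> U)
           \<and> (\<forall>F. countable F \<and> F \<noteq> {} \<and> F \<subseteq> U \<longrightarrow> \<Inter>F \<in> U))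
          \<longrightarrow> (\<exists>i\<in>I. U = {A. A \<subseteq> I \<and> i \<in> A}))"

definition Hgrp :: "('i \<Rightarrow> int) set" where
  "Hgrp = {g. finite {i. g i \<noteq> 0}}"

definition pair :: "('i \<Rightarrow> int) \<Rightarrow> ('i \<Rightarrow> 'a::comm_ring_1) \<Rightarrow> 'a" where
  "pair g x = (\<Sum>i\<in>{i. g i \<noteq> 0}. of_int (g i) * x i)"

definition Tred :: "real \<Rightarrow> real" where
  "Tred r = r - of_int \<lceil>r - 1/2\<rceil>"

definition Tcircle :: "real set" where
  "Tcircle = {r. -1/2 < r \<and> r \<le> 1/2}"

definition Tpow :: "('i \<Rightarrow> real) set" where
  "Tpow = {t. \<forall>i. t i \<in> Tcircle}"

definition pairT :: "('i \<Rightarrow> int) \<Rightarrow> ('i \<Rightarrow> real) \<Rightarrow> real" where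
  "pairT g t = Tred (pair g t)"

text \<open>Topology t_p(Z^I) on H: pointwise convergence on Z^I, i.e. H carries the topology
  inherited from Z^(Z^I) (Z discrete) via g |-> (x |-> <g,x>).\<close>
definition tpH :: "('i \<Rightarrow> int) topology" where
  "tpH = pullback_topology Hgrp (\<lambda>g x. pair g x)
           (product_topology (\<lambda>_. discrete_topology (UNIV :: int set)) (UNIV :: ('i \<Rightarrow> int) set))"

definition circle_emb :: "real \<Rightarrow> complex" where
  "circle_emb r = cis (2 * pi * r)"

text \<open>The dual group of H as a subset of T^I: t is in it iff the character
  g |-> <g,t> (automatically a homomorphism) is continuous.\<close>
definition Hdual :: "('i \<Rightarrow> real) set" where
  "Hdual = {t \<in> Tpow. continuous_map tpH (top_of_set (sphere 0 1)) (\<lambda>g. circle_emb (pairT g t))}"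

end

theory Submission
  imports Defs
begin

lemma pair_sum:
  assumes "finite S" "{i. g i \<noteq> 0} \<subseteq> S"
  shows "pair g x = (\<Sum>i\<in>S. of_int (g i) * x i)"
  unfolding pair_def
  by (rule sum.mono_neutral_left) (use assms in auto)

lemma Hgrp_diff: "g \<in> Hgrp \<Longrightarrow> h \<in> Hgrp \<Longrightarrow> (\<lambda>i. g i - h i) \<in> Hgrp"
  unfolding Hgrp_def
  by (auto intro: finite_subset[of _ "{i. g i \<noteq> 0} \<union> {i. h i \<noteq> 0}"])

lemma Hgrp_scale: "g \<in> Hgrp \<Longrightarrow> (\<lambda>i. k * g i) \<in> Hgrp"
  unfolding Hgrp_def
  by (auto intro: finite_subset[of _ "{i. g i \<noteq> 0}"])

lemma pair_diff:
  assumes "g \<in> Hgrp" "h \<in> Hgrp"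
  shows "pair (\<lambda>i. g i - h i) x = pair g x - pair h x"
proof -
  let ?S = "{i. g i \<noteq> 0} \<union> {i. h i \<noteq> 0}"
  have f: "finite ?S" using assms by (auto simp: Hgrp_def)
  have "pair (\<lambda>i. g i - h i) x = (\<Sum>i\<in>?S. of_int (g i - h i) * x i)"
    by (rule pair_sum[OF f]) auto
  also have "\<dots> = (\<Sum>i\<in>?S. of_int (g i) * x i) - (\<Sum>i\<in>?S. of_int (h i) * x i)"
    by (simp add: algebra_simps sum_subtractf)
  also have "\<dots> = pair g x - pair h x"
    using pair_sum[OF f, of g x] pair_sum[OF f, of h x] by auto
  finally show ?thesis .
qed

lemma pair_scale:
  assumes "g \<in> Hgrp"
  shows "pair (\<lambda>i. k * g i) x = of_int k * pair g x"
proof -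
  let ?S = "{i. g i \<noteq> 0}"
  have f: "finite ?S" using assms by (auto simp: Hgrp_def)
  have "pair (\<lambda>i. k * g i) x = (\<Sum>i\<in>?S. of_int (k * g i) * x i)"
    by (rule pair_sum[OF f]) auto
  also have "\<dots> = of_int k * pair g x"
    by (simp add: pair_def sum_distrib_left algebra_simps)
  finally show ?thesis .
qed

lemma pair_zero: "pair (\<lambda>i. 0) x = 0"
  by (simp add: pair_def)

lemma cis_shift: "cis (2 * pi * (r + of_int n)) = cis (2 * pi * r)"
proof -
  have "cis (2 * pi * (r + of_int n)) = cis (2 * pi * r) * cis (2 * pi * of_int n)"
    by (simp add: cis_mult algebra_simps)
  also have "cis (2 * pi * of_int n) = 1" by (rule cis_multiple_2pi) simp
  finally show ?thesis by simp
qed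

lemma circle_Tred: "circle_emb (Tred r) = cis (2 * pi * r)"
  unfolding circle_emb_def Tred_def
  using cis_shift[of r "- \<lceil>r - 1/2\<rceil>"] by simp

lemma Tred_zero: "Tred r = 0 \<Longrightarrow> r = of_int \<lceil>r - 1/2\<rceil>"
  unfolding Tred_def by simp

lemma Tred_range: "-1/2 < Tred r \<and> Tred r \<le> 1/2"
  unfolding Tred_def
  using ceiling_correct[of "r - 1/2"] by linarith

lemma cos_nonpos:
  assumes "1/4 \<le> y" "y \<le> 3/4"
  shows "cos (2 * pi * y) \<le> 0"
proof -
  have "0 \<le> cos (2 * pi * y - pi)"
    apply (rule cos_ge_zero) using assms pi_gt_zero by (simp_all add: field_simps)
  moreover have "cos (2 * pi * y - pi) = - cos (2 * pi * y)"
    by (simp add: cos_diff)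
  ultimately show ?thesis by simp
qed

lemma arch_cos:
  fixes r :: real
  assumes "r \<noteq> 0" "\<bar>r\<bar> \<le> 1/2"
  shows "\<exists>k::int. cos (2 * pi * (of_int k * r)) \<le> 0"
proof -
  define k where "k = \<lceil>1 / (4 * \<bar>r\<bar>)\<rceil>"
  have a: "\<bar>r\<bar> > 0" using assms by simp
  have k1: "of_int k \<ge> 1 / (4 * \<bar>r\<bar>)" "of_int k < 1 / (4 * \<bar>r\<bar>) + 1"
    unfolding k_def by linarith+
  have "of_int k * \<bar>r\<bar> \<ge> 1/4"
    using k1(1) a by (simp add: field_simps)
  moreover have "of_int k * \<bar>r\<bar> < 1/4 + \<bar>r\<bar>"
  proof -
    have "of_int k * \<bar>r\<bar> < (1 / (4 * \<bar>r\<bar>) + 1) * \<bar>r\<bar>"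
      using k1(2) a by (simp add: mult_strict_right_mono)
    also have "\<dots> = 1/4 + \<bar>r\<bar>" using a by (simp add: field_simps)
    finally show ?thesis .
  qed
  ultimately have "cos (2 * pi * (of_int k * \<bar>r\<bar>)) \<le> 0"
    using assms by (intro cos_nonpos) auto
  moreover have "cos (2 * pi * (of_int k * \<bar>r\<bar>)) = cos (2 * pi * (of_int k * r))"
  proof (cases "r \<ge> 0")
    case False
    then have "2 * pi * (of_int k * \<bar>r\<bar>) = - (2 * pi * (of_int k * r))" by simp
    then show ?thesis by (simp only: cos_minus)
  qed simp
  ultimately show ?thesis by metis
qed

lemma topspace_tpH: "topspace tpH = Hgrp"
  unfolding tpH_def by (simp add: topspace_pullback_topology)

lemma chi_eq: "circle_emb (pairT g t) = cis (2 * pi * pair g t)"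
  unfolding pairT_def by (rule circle_Tred)

theorem lemma4p8:
  fixes t :: "'i \<Rightarrow> real"
  assumes "nonmeasurable_card (UNIV :: 'i set)"
    and "t \<in> Tpow"
  shows "t \<in> Hdual \<longleftrightarrow>
    (\<exists>X :: ('i \<Rightarrow> int) set. finite X \<and>
       (\<forall>g\<in>Hgrp. (\<forall>x\<in>X. pair g x = 0) \<longrightarrow> pairT g t = 0))"
proof
  assume "t \<in> Hdual"
  then have cont: "continuous_map tpH (top_of_set (sphere 0 1)) (\<lambda>g. circle_emb (pairT g t))"
    by (simp add: Hdual_def)
  define U where "U = {z \<in> sphere (0::complex) 1. Re z > 0}"
  have "openin (top_of_set (sphere 0 1)) U"
    unfolding U_def openin_open
    by (rule exI[of _ "{z. Re z > 0}"]) (auto simp: open_halfspace_Re_gt)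
  then have "openin tpH {g \<in> topspace tpH. circle_emb (pairT g t) \<in> U}"
    using cont by (simp add: continuous_map)
  then obtain V where V: "openin (product_topology (\<lambda>_. discrete_topology (UNIV :: int set)) (UNIV :: ('i \<Rightarrow> int) set)) V"
    and P: "{g \<in> Hgrp. circle_emb (pairT g t) \<in> U} = (\<lambda>g x. pair g x) -` V \<inter> Hgrp"
    unfolding topspace_tpH unfolding tpH_def openin_pullback_topology by blast
  have z: "(\<lambda>i. 0::int) \<in> Hgrp" by (simp add: Hgrp_def)
  have "circle_emb (pairT (\<lambda>i. 0::int) t) \<in> U"
    by (simp add: chi_eq pair_zero U_def)
  with z P have "(\<lambda>x. pair (\<lambda>i. 0::int) x) \<in> V" by blast
  then have "(\<lambda>x. 0::int) \<in> V" by (simp add: pair_zero)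
  then obtain W where Wf: "finite {x. W x \<noteq> UNIV}"
    and W0: "(\<lambda>x. 0::int) \<in> Pi\<^sub>E UNIV W" and WV: "Pi\<^sub>E UNIV W \<subseteq> V"
    using V unfolding openin_product_topology_alt by auto
  define X where "X = {x. W x \<noteq> UNIV}"
  have inU: "circle_emb (pairT g t) \<in> U" if "g \<in> Hgrp" "\<forall>x\<in>X. pair g x = 0" for g
  proof -
    have "(\<lambda>x. pair g x) \<in> Pi\<^sub>E UNIV W"
    proof (simp add: PiE_iff, intro allI)
      fix x show "pair g x \<in> W x"
        using that W0 by (cases "x \<in> X") (auto simp: X_def PiE_iff)
    qed
    with WV that(1) P show ?thesis by blast
  qed
  show "\<exists>X :: ('i \<Rightarrow> int) set. finite X \<and>
       (\<forall>g\<in>Hgrp. (\<forall>x\<in>X. pair g x = 0) \<longrightarrow> pairT g t = 0)"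
  proof (intro exI conjI ballI impI)
    show "finite X" using Wf X_def by simp
    fix g assume g: "g \<in> Hgrp" and gX: "\<forall>x\<in>X. pair g x = 0"
    show "pairT g t = 0"
    proof (rule ccontr)
      assume ne: "pairT g t \<noteq> 0"
      let ?r = "pairT g t"
      have "\<bar>?r\<bar> \<le> 1/2" using Tred_range[of "pair g t"] unfolding pairT_def by linarith
      then obtain k :: int where k: "cos (2 * pi * (of_int k * ?r)) \<le> 0"
        using arch_cos ne by blast
      let ?h = "\<lambda>i. k * g i"
      have h: "?h \<in> Hgrp" using g by (rule Hgrp_scale)
      have "\<forall>x\<in>X. pair ?h x = 0"
      proof
        fix x assume "x \<in> X"
        have "pair ?h x = of_int k * pair g x" by (rule pair_scale[OF g])
        then show "pair ?h x = 0" using gX \<open>x \<in> X\<close> by simp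
      qed
      then have "circle_emb (pairT ?h t) \<in> U" using inU h by blast
      then have pos: "Re (cis (2 * pi * (of_int k * pair g t))) > 0"
        by (simp add: chi_eq pair_scale[OF g] U_def)
      have "pair g t = ?r + of_int \<lceil>pair g t - 1/2\<rceil>"
        by (simp add: pairT_def Tred_def)
      then have "of_int k * pair g t = of_int k * ?r + of_int (k * \<lceil>pair g t - 1/2\<rceil>)"
        by (metis distrib_left of_int_mult)
      then have "cis (2 * pi * (of_int k * pair g t)) = cis (2 * pi * (of_int k * ?r))"
        by (simp only: cis_shift)
      with pos k show False by simp
    qed
  qed
next
  assume "\<exists>X :: ('i \<Rightarrow> int) set. finite X \<and>
       (\<forall>g\<in>Hgrp. (\<forall>x\<in>X. pair g x = 0) \<longrightarrow> pairT g t = 0)"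
  then obtain X :: "('i \<Rightarrow> int) set" where Xf: "finite X"
    and XN: "\<And>g. g \<in> Hgrp \<Longrightarrow> (\<forall>x\<in>X. pair g x = 0) \<Longrightarrow> pairT g t = 0" by blast
  have same: "circle_emb (pairT g t) = circle_emb (pairT h t)"
    if g: "g \<in> Hgrp" and h: "h \<in> Hgrp" and gh: "\<forall>x\<in>X. pair g x = pair h x" for g h
  proof -
    let ?d = "\<lambda>i. g i - h i"
    have d: "?d \<in> Hgrp" using g h by (rule Hgrp_diff)
    have "\<forall>x\<in>X. pair ?d x = 0"
    proof
      fix x assume "x \<in> X"
      have "pair ?d x = pair g x - pair h x" by (rule pair_diff[OF g h])
      then show "pair ?d x = 0" using gh \<open>x \<in> X\<close> by simp
    qed
    then have "pairT ?d t = 0" using XN[OF d] by simp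
    then have "pair ?d t = of_int \<lceil>pair ?d t - 1/2\<rceil>"
      unfolding pairT_def by (rule Tred_zero)
    then have "pair g t = pair h t + of_int \<lceil>pair ?d t - 1/2\<rceil>"
      using pair_diff[OF g h, of t] by simp
    then show ?thesis by (simp add: chi_eq cis_shift)
  qed
  have "continuous_map tpH (top_of_set (sphere 0 1)) (\<lambda>g. circle_emb (pairT g t))"
    unfolding continuous_map
  proof (intro conjI allI impI)
    show "(\<lambda>g. circle_emb (pairT g t)) ` topspace tpH \<subseteq> topspace (top_of_set (sphere 0 1))"
      by (auto simp: chi_eq)
    fix U assume U: "openin (top_of_set (sphere (0::complex) 1)) U"
    show "openin tpH {x \<in> topspace tpH. circle_emb (pairT x t) \<in> U}"
    proof (subst openin_subopen, intro ballI)
      fix h assume hS: "h \<in> {x \<in> topspace tpH. circle_emb (pairT x t) \<in> U}"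
      then have h: "h \<in> Hgrp" by (simp add: topspace_tpH)
      define W where "W = (\<lambda>x. if x \<in> X then {pair h x} else (UNIV :: int set))"
      define T where "T = {g \<in> Hgrp. \<forall>x\<in>X. pair g x = pair h x}"
      have "openin (product_topology (\<lambda>_. discrete_topology (UNIV :: int set)) (UNIV :: ('i \<Rightarrow> int) set)) (Pi\<^sub>E UNIV W)"
        unfolding openin_PiE_gen
      proof (rule disjI2, intro conjI ballI)
        have "{i \<in> UNIV. W i \<noteq> topspace (discrete_topology (UNIV :: int set))} \<subseteq> X"
          by (auto simp: W_def)
        then show "finite {i \<in> UNIV. W i \<noteq> topspace (discrete_topology (UNIV :: int set))}"
          using Xf by (rule finite_subset)
      qed simp
      moreover have "T = (\<lambda>g x. pair g x) -` (Pi\<^sub>E UNIV W) \<inter> Hgrp"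
      proof (rule set_eqI)
        fix g
        have "(\<lambda>x. pair g x) \<in> Pi\<^sub>E UNIV W \<longleftrightarrow> (\<forall>x. pair g x \<in> W x)"
          by (simp add: PiE_UNIV_domain Pi_iff)
        also have "\<dots> \<longleftrightarrow> (\<forall>x\<in>X. pair g x = pair h x)"
          unfolding W_def by auto
        finally show "g \<in> T \<longleftrightarrow> g \<in> (\<lambda>g x. pair g x) -` (Pi\<^sub>E UNIV W) \<inter> Hgrp"
          by (auto simp: T_def)
      qed
      ultimately have "openin tpH T"
        unfolding tpH_def openin_pullback_topology by blast
      moreover have "h \<in> T" using h by (simp add: T_def)
      moreover have "T \<subseteq> {x \<in> topspace tpH. circle_emb (pairT x t) \<in> U}"
      proof
        fix g assume "g \<in> T"
        then have g: "g \<in> Hgrp" "\<forall>x\<in>X. pair g x = pair h x" by (auto simp: T_def)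
        have "circle_emb (pairT g t) = circle_emb (pairT h t)" by (rule same[OF g(1) h g(2)])
        then show "g \<in> {x \<in> topspace tpH. circle_emb (pairT x t) \<in> U}"
          using hS g(1) by (simp add: topspace_tpH)
      qed
      ultimately show "\<exists>T. openin tpH T \<and> h \<in> T \<and> T \<subseteq> {x \<in> topspace tpH. circle_emb (pairT x t) \<in> U}"
        by blast
    qed
  qed
  then show "t \<in> Hdual" using assms(2) by (simp add: Hdual_def)
qed

end
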